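(* Let $Q=[(n_1,q_1),\dots,(n_m,q_m)]$ be a compatible pointed irregular type. Then a list $Q'=[(n'_1,q'_1),\dots,(n'_p,q'_p)]$ satisfies $Q'\sim Q$ if and only if $Q'$ is a compatible pointed irregular type whose labelled fission datum equals that of $Q$, i.e. $p=m$, $n'_i=n_i$ and $\mathrm{Levels}(q'_i)=\mathrm{Levels}(q_i)$ for all $i$, and $f_{q'_i,q'_j}=f_{q_i,q_j}$ for all $i\ne j$.
   Context: Exponential factors: finite sums $q=\sum_ka_kx^k$, $a_k\in\mathbb C$, $k\in\mathbb Q_{>0}$; $E(q)$ = set of exponents with $a_k\ne0$; $\mathrm{slope}(q)=\max E(q)$ ($0$ if $q=0$); $\mathrm{ram}(q)$ = least $r\ge1$ with $q\in x^{1/r}\mathbb C[x^{1/r}]$. Galois operator $\sigma(\sum a_kx^k)=\sum a_ke^{-2\pi\sqrt{-1}k}x^k$; Stokes circle $\langle q\rangle=\{\sigma^i(q)\}$. Truncation $\tau_k(\sum a_{k'}x^{k'})=\sum_{k'\ge k}a_{k'}x^{k'}$. $\mathrm{Levels}(q)=\{\mathrm{slope}(q-\sigma^i(q)):i\in\mathbb Z\}\setminus\{0\}$. Fission exponent: for $q,\hat q$ in distinct orbits, if some $k\in E(q)$ has $\langle\tau_k(q)\rangle=\langle\tau_k(\hat q)\rangle$, let $k$ be the smallest, $q_c=\tau_k(q)$, $\hat q_c=\tau_k(\hat q)$; else $q_c=\hat q_c=0$; $f_{q,\hat q}=\max(\mathrm{slope}(q-q_c),\mathrm{slope}(\hat q-\hat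 q_c))$. Pointed irregular type: $Q=[(n_1,q_1),\dots,(n_m,q_m)]$ with $n_i\in\mathbb N_{>0}$ and $q_i$ in pairwise distinct Galois orbits. $Q$ is compatible if for all $k\in\mathbb Q_{>0}$ and all $i,j$, $\langle\tau_k(q_i)\rangle=\langle\tau_k(q_j)\rangle$ implies $\tau_k(q_i)=\tau_k(q_j)$. Its labelled fission datum is the list $[(n_i,\mathrm{Levels}(q_i))]_{i=1}^m$ together with the numbers $f_{q_i,q_j}$ ($i\ne j$). For a list $Q'$ of pairs $(n'_i,q'_i)$ with $n'_i\in\mathbb N_{>0}$ and $q'_i$ exponential factors, $Q'\sim Q$ means $p=m$, $n'_i=n_i$, and $\mathrm{slope}(\sigma^k(q'_i)-\sigma^l(q'_j))=\mathrm{slope}(\sigma^k(q_i)-\sigma^l(q_j))$ for all $1\le i,j\le m$, $0\le k\le\mathrm{ram}(q_i)$, $0\le l\le\mathrm{ram}(q_j)$. *)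

theory Defs
  imports Complex_Main
begin

text \<open>An exponential factor \<open>q = \<Sum> a_k x^k\<close> is represented by its coefficient
  function \<open>rat \<Rightarrow> complex\<close> (k \<mapsto> a_k); it must have finite support contained in
  the positive rationals.\<close>

type_synonym expfac = "rat \<Rightarrow> complex"

definition is_expfac :: "expfac \<Rightarrow> bool" where
  "is_expfac q \<longleftrightarrow> finite {k. q k \<noteq> 0} \<and> (\<forall>k. q k \<noteq> 0 \<longrightarrow> k > 0)"

definition Exps :: "expfac \<Rightarrow> rat set" where
  "Exps q = {k. q k \<noteq> 0}"

definition slope :: "expfac \<Rightarrow> rat" where
  "slope q = (if Exps q = {} then 0 else Max (Exps q))"

definition ram :: "expfac \<Rightarrow> nat" where
  "ram q = (LEAST r::nat. r \<ge> 1 \<and> (\<forall>k \<in> Exps q. \<exists>j::int. k = of_int j / of_nat r))"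

text \<open>\<open>sigma_pow i\<close> is the i-th power (i integer) of the Galois operator
  \<open>\<sigma>(\<Sum> a_k x^k) = \<Sum> a_k e^{-2\<pi>\<surd>-1 k} x^k\<close>.\<close>

definition sigma_pow :: "int \<Rightarrow> expfac \<Rightarrow> expfac" where
  "sigma_pow i q = (\<lambda>k. cis (- 2 * pi * of_rat k * of_int i) * q k)"

definition stokes_circle :: "expfac \<Rightarrow> expfac set" where
  "stokes_circle q = {sigma_pow i q | i. True}"

definition trunc :: "rat \<Rightarrow> expfac \<Rightarrow> expfac" where
  "trunc k q = (\<lambda>k'. if k' \<ge> k then q k' else 0)"

definition Levels :: "expfac \<Rightarrow> rat set" where
  "Levels q = {slope (q - sigma_pow i q) | i. True} - {0}"

definition fission_exp :: "expfac \<Rightarrow> expfac \<Rightarrow> rat" where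
  "fission_exp q qh =
    (let K = {k \<in> Exps q. stokes_circle (trunc k q) = stokes_circle (trunc k qh)};
         qc = (if K = {} then (\<lambda>_. 0) else trunc (Min K) q);
         qhc = (if K = {} then (\<lambda>_. 0) else trunc (Min K) qh)
     in max (slope (q - qc)) (slope (qh - qhc)))"

text \<open>Pointed irregular types as lists of pairs (0-based indexing).\<close>

definition pointed_irr_type :: "(nat \<times> expfac) list \<Rightarrow> bool" where
  "pointed_irr_type Q \<longleftrightarrow>
     (\<forall>i < length Q. fst (Q ! i) > 0 \<and> is_expfac (snd (Q ! i))) \<and>
     (\<forall>i < length Q. \<forall>j < length Q. i \<noteq> j \<longrightarrow>
        stokes_circle (snd (Q ! i)) \<noteq> stokes_circle (snd (Q ! j)))"

definition compatible :: "(nat \<times> expfac) list \<Rightarrow> bool" where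
  "compatible Q \<longleftrightarrow>
     (\<forall>k::rat. k > 0 \<longrightarrow> (\<forall>i < length Q. \<forall>j < length Q.
        stokes_circle (trunc k (snd (Q ! i))) = stokes_circle (trunc k (snd (Q ! j))) \<longrightarrow>
        trunc k (snd (Q ! i)) = trunc k (snd (Q ! j))))"

definition same_fission_datum :: "(nat \<times> expfac) list \<Rightarrow> (nat \<times> expfac) list \<Rightarrow> bool" where
  "same_fission_datum Q' Q \<longleftrightarrow>
     length Q' = length Q \<and>
     (\<forall>i < length Q. fst (Q' ! i) = fst (Q ! i) \<and>
        Levels (snd (Q' ! i)) = Levels (snd (Q ! i))) \<and>
     (\<forall>i < length Q. \<forall>j < length Q. i \<noteq> j \<longrightarrow>
        fission_exp (snd (Q' ! i)) (snd (Q' ! j)) = fission_exp (snd (Q ! i)) (snd (Q ! j)))"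

definition sim_irr :: "(nat \<times> expfac) list \<Rightarrow> (nat \<times> expfac) list \<Rightarrow> bool" where
  "sim_irr Q' Q \<longleftrightarrow>
     length Q' = length Q \<and>
     (\<forall>i < length Q. fst (Q' ! i) = fst (Q ! i)) \<and>
     (\<forall>i < length Q. \<forall>j < length Q.
        \<forall>k::nat \<le> ram (snd (Q ! i)). \<forall>l::nat \<le> ram (snd (Q ! j)).
          slope (sigma_pow (int k) (snd (Q' ! i)) - sigma_pow (int l) (snd (Q' ! j))) =
          slope (sigma_pow (int k) (snd (Q ! i)) - sigma_pow (int l) (snd (Q ! j))))"

end

theory Submission
  imports Defs
begin


lemma sigma_pow_add: "sigma_pow a (sigma_pow b q) = sigma_pow (a+b) q"
proof (rule ext)
  fix k
  have "cis (- 2 * pi * of_rat k * of_int a) * cis (- 2 * pi * of_rat k * of_int b) =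
        cis (- 2 * pi * of_rat k * of_int (a + b))"
    by (simp add: cis_mult algebra_simps)
  thus "sigma_pow a (sigma_pow b q) k = sigma_pow (a+b) q k"
    unfolding sigma_pow_def by (metis mult.assoc)
qed

lemma sigma_pow_0[simp]: "sigma_pow 0 q = q"
  unfolding sigma_pow_def by simp

lemma sigma_pow_app: "sigma_pow d q k = cis (- 2 * pi * of_rat k * of_int d) * q k"
  unfolding sigma_pow_def by simp

lemma sigma_pow_diff: "sigma_pow a (x - y) = sigma_pow a x - sigma_pow a y"
  unfolding sigma_pow_def by (rule ext) (simp add: algebra_simps)

lemma Exps_sigma[simp]: "Exps (sigma_pow a q) = Exps q"
  unfolding Exps_def sigma_pow_def by simp

lemma slope_sigma[simp]: "slope (sigma_pow a q) = slope q"
  unfolding slope_def by simp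

lemma trunc_sigma: "trunc s (sigma_pow d q) = sigma_pow d (trunc s q)"
  unfolding trunc_def sigma_pow_def by (rule ext) simp

lemma expfac_diff: "is_expfac x \<Longrightarrow> is_expfac y \<Longrightarrow> is_expfac (x - y)"
  unfolding is_expfac_def
  by (rule conjI, rule finite_subset[of _ "{k. x k \<noteq> 0} \<union> {k. y k \<noteq> 0}"]) (auto, metis)

lemma expfac_sigma: "is_expfac x \<Longrightarrow> is_expfac (sigma_pow d x)"
  unfolding is_expfac_def sigma_pow_def by simp

lemma expfac_trunc: "is_expfac x \<Longrightarrow> is_expfac (trunc s x)"
  unfolding is_expfac_def trunc_def
  by (rule conjI, rule finite_subset[of _ "{k. x k \<noteq> 0}"]) auto

lemma expfac_finite: "is_expfac x \<Longrightarrow> finite (Exps x)"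
  unfolding is_expfac_def Exps_def by simp

lemma slope_ge: "finite (Exps x) \<Longrightarrow> x k \<noteq> 0 \<Longrightarrow> k \<le> slope x"
  unfolding slope_def by (auto simp: Exps_def)

lemma slope_nz: "finite (Exps x) \<Longrightarrow> x \<noteq> (\<lambda>_. 0) \<Longrightarrow> x (slope x) \<noteq> 0"
proof -
  assume f: "finite (Exps x)" and "x \<noteq> (\<lambda>_. 0)"
  then have ne: "Exps x \<noteq> {}" unfolding Exps_def by auto
  have "Max (Exps x) \<in> Exps x" using Max_in[OF f ne] .
  thus ?thesis using ne unfolding slope_def Exps_def by auto
qed

lemma slope_gt_zero: "finite (Exps x) \<Longrightarrow> slope x < k \<Longrightarrow> x k = 0"
  using slope_ge by force

lemma slope_eqI: "finite (Exps x) \<Longrightarrow> x s \<noteq> 0 \<Longrightarrow> (\<And>k. k > s \<Longrightarrow> x k = 0) \<Longrightarrow> slope x = s"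
proof -
  assume f: "finite (Exps x)" and s: "x s \<noteq> 0" and h: "\<And>k. k > s \<Longrightarrow> x k = 0"
  have "s \<le> slope x" using slope_ge[OF f s] .
  moreover have "x \<noteq> (\<lambda>_. 0)" using s by auto
  hence "x (slope x) \<noteq> 0" using slope_nz[OF f] by blast
  hence "\<not> slope x > s" using h by blast
  ultimately show ?thesis by simp
qed

lemma slope_zero_fun[simp]: "slope (\<lambda>_. 0) = 0"
  unfolding slope_def Exps_def by simp

lemma slope_self[simp]: "slope (x - x) = 0"
proof -
  have "x - x = (\<lambda>_. 0)" by (simp add: fun_eq_iff)
  thus ?thesis by simp
qed

lemma slope_le: "finite (Exps x) \<Longrightarrow> 0 \<le> t \<Longrightarrow> (\<And>k. x k \<noteq> 0 \<Longrightarrow> k \<le> t) \<Longrightarrow> slope x \<le> t"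
proof -
  assume f: "finite (Exps x)" "0 \<le> t" and h: "\<And>k. x k \<noteq> 0 \<Longrightarrow> k \<le> t"
  show ?thesis
  proof (cases "x = (\<lambda>_. 0)")
    case True thus ?thesis using f by simp
  next
    case False thus ?thesis using slope_nz[OF f(1) False] h by blast
  qed
qed

lemma slope_nonneg: "is_expfac x \<Longrightarrow> 0 \<le> slope x"
proof -
  assume e: "is_expfac x"
  show ?thesis
  proof (cases "x = (\<lambda>_. 0)")
    case True thus ?thesis by simp
  next
    case False
    hence "x (slope x) \<noteq> 0" using slope_nz expfac_finite e by blast
    thus ?thesis using e unfolding is_expfac_def by force
  qed
qed

lemma slope_zero_iff: "is_expfac x \<Longrightarrow> slope x = 0 \<longleftrightarrow> x = (\<lambda>_. 0)"
proof
  assume e: "is_expfac x" and s: "slope x = 0"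
  show "x = (\<lambda>_. 0)"
  proof (rule ccontr)
    assume "x \<noteq> (\<lambda>_. 0)"
    hence "x (slope x) \<noteq> 0" using slope_nz expfac_finite e by blast
    hence "slope x > 0" using e unfolding is_expfac_def by blast
    thus False using s by simp
  qed
qed simp

lemma trunc_eq_iff: "is_expfac x \<Longrightarrow> is_expfac y \<Longrightarrow> 0 < k \<Longrightarrow>
   trunc k x = trunc k y \<longleftrightarrow> slope (x - y) < k"
proof -
  assume ex: "is_expfac x" and ey: "is_expfac y" and k: "0 < k"
  have e: "is_expfac (x - y)" using expfac_diff ex ey by blast
  have f: "finite (Exps (x - y))" using expfac_finite e .
  show ?thesis
  proof
    assume t: "trunc k x = trunc k y"
    have z: "\<And>k'. k' \<ge> k \<Longrightarrow> (x - y) k' = 0"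
      using fun_cong[OF t] unfolding trunc_def by (metis diff_self fun_diff_def)
    show "slope (x - y) < k"
    proof (cases "x - y = (\<lambda>_. 0)")
      case True thus ?thesis using k by simp
    next
      case False
      hence "(x - y) (slope (x - y)) \<noteq> 0" using slope_nz f by blast
      thus ?thesis using z by (meson not_less)
    qed
  next
    assume "slope (x - y) < k"
    hence "\<And>k'. k' \<ge> k \<Longrightarrow> (x - y) k' = 0" using slope_gt_zero[OF f] by simp
    thus "trunc k x = trunc k y" unfolding trunc_def by (auto simp: fun_eq_iff)
  qed
qed

lemma circle_sigma[simp]: "stokes_circle (sigma_pow d q) = stokes_circle q"
  unfolding stokes_circle_def
  by (auto simp: sigma_pow_add) (metis add.commute diff_add_cancel sigma_pow_add)

lemma circle_eq_iff: "stokes_circle a = stokes_circle b \<longleftrightarrow> (\<exists>m. b = sigma_pow m a)"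
proof
  assume "stokes_circle a = stokes_circle b"
  moreover have "b \<in> stokes_circle b" unfolding stokes_circle_def by (metis (mono_tags) mem_Collect_eq sigma_pow_0)
  ultimately show "\<exists>m. b = sigma_pow m a" unfolding stokes_circle_def by auto
qed auto



definition Sfun :: "expfac \<Rightarrow> int \<Rightarrow> rat" where
  "Sfun q d = slope (q - sigma_pow d q)"

lemma diff_sigma_app: "(q - sigma_pow d q) k = (1 - cis (- 2 * pi * of_rat k * of_int d)) * q k"
  by (simp add: sigma_pow_app algebra_simps)

lemma Levels_Sfun: "Levels q = range (Sfun q) - {0}"
  unfolding Levels_def Sfun_def by auto

lemma Sfun_le:
  assumes eq: "is_expfac q" and eq': "is_expfac q'" and L: "Levels q = Levels q'"
  shows "Sfun q d \<le> Sfun q' d"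
proof (cases "Sfun q d = 0")
  case True thus ?thesis using slope_nonneg expfac_diff expfac_sigma eq' unfolding Sfun_def by metis
next
  case False
  let ?s = "Sfun q d"
  have "?s \<in> Levels q'" using L False unfolding Levels_Sfun by auto
  then obtain i where si: "?s = Sfun q' i" and nz: "Sfun q' i \<noteq> 0" unfolding Levels_Sfun by auto
  have ei: "is_expfac (q' - sigma_pow i q')" using expfac_diff expfac_sigma eq' by blast
  have "q' - sigma_pow i q' \<noteq> (\<lambda>_. 0)" using nz unfolding Sfun_def by auto
  hence "(q' - sigma_pow i q') ?s \<noteq> 0" using slope_nz expfac_finite ei si unfolding Sfun_def by metis
  hence q's: "q' ?s \<noteq> 0" unfolding diff_sigma_app by simp
  have ed: "is_expfac (q - sigma_pow d q)" using expfac_diff expfac_sigma eq by blast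
  have "q - sigma_pow d q \<noteq> (\<lambda>_. 0)" using False unfolding Sfun_def by auto
  hence "(q - sigma_pow d q) ?s \<noteq> 0" using slope_nz expfac_finite ed unfolding Sfun_def by metis
  hence "(1 - cis (- 2 * pi * of_rat ?s * of_int d)) \<noteq> 0" unfolding diff_sigma_app by simp
  hence "(q' - sigma_pow d q') ?s \<noteq> 0" using q's unfolding diff_sigma_app by simp
  moreover have "is_expfac (q' - sigma_pow d q')" using expfac_diff expfac_sigma eq' by blast
  ultimately show ?thesis using slope_ge expfac_finite unfolding Sfun_def by metis
qed

lemma Sfun_eq:
  assumes "is_expfac q" "is_expfac q'" "Levels q = Levels q'"
  shows "Sfun q d = Sfun q' d"
  by (rule antisym[OF Sfun_le[OF assms] Sfun_le[OF assms(2,1) assms(3)[symmetric]]])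

lemma ram_ex:
  assumes e: "is_expfac q"
  shows "\<exists>r::nat. r \<ge> 1 \<and> (\<forall>k \<in> Exps q. \<exists>j::int. k = of_int j / of_nat r)"
proof -
  let ?E = "Exps q"
  have f: "finite ?E" using expfac_finite e .
  define r where "r = (\<Prod>k\<in>?E. nat (snd (quotient_of k)))"
  have pos: "\<And>k. nat (snd (quotient_of k)) \<ge> 1" using quotient_of_denom_pos' by (simp add: Suc_le_eq)
  have "r \<ge> 1" unfolding r_def by (rule prod_ge_1) (rule pos)
  moreover have "\<forall>k \<in> ?E. \<exists>j::int. k = of_int j / of_nat r"
  proof
    fix k assume k: "k \<in> ?E"
    obtain a b where ab: "quotient_of k = (a, b)" by (cases "quotient_of k")
    have b: "b > 0" using quotient_of_denom_pos[OF ab] .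
    have kab: "k = of_int a / of_int b" using quotient_of_div[OF ab] .
    define c where "c = (\<Prod>k\<in>?E - {k}. nat (snd (quotient_of k)))"
    have rc: "r = nat b * c" unfolding r_def c_def using prod.remove[OF f k, of "\<lambda>k. nat (snd (quotient_of k))"] ab by simp
    have c: "c \<ge> 1" unfolding c_def by (rule prod_ge_1) (rule pos)
    have "k = of_int (a * int c) / of_nat r"
      using b c by (simp add: kab rc)
    thus "\<exists>j::int. k = of_int j / of_nat r" by blast
  qed
  ultimately show ?thesis by blast
qed

lemma ram_prop:
  assumes e: "is_expfac q"
  shows "ram q \<ge> 1 \<and> (\<forall>k \<in> Exps q. \<exists>j::int. k = of_int j / of_nat (ram q))"
  unfolding ram_def using LeastI_ex[OF ram_ex[OF e]] .

lemma sigma_ram: assumes e: "is_expfac q" shows "sigma_pow (int (ram q)) q = q"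
proof
  fix k
  show "sigma_pow (int (ram q)) q k = q k"
  proof (cases "q k = 0")
    case True thus ?thesis by (simp add: sigma_pow_app)
  next
    case False
    hence "k \<in> Exps q" unfolding Exps_def by simp
    then obtain j where j: "k = of_int j / of_nat (ram q)" using ram_prop[OF e] by blast
    have r: "ram q \<ge> 1" using ram_prop[OF e] by blast
    have "of_rat k * real (ram q) = real_of_int j"
      using r by (simp add: j of_rat_divide)
    hence "- 2 * pi * of_rat k * of_int (int (ram q)) = 2 * pi * real_of_int (- j)"
      by (simp add: algebra_simps)
    moreover have "cis (2 * pi * real_of_int (- j)) = 1" by (rule cis_multiple_2pi) simp
    ultimately have "cis (- 2 * pi * of_rat k * of_int (int (ram q))) = 1" by metis
    thus ?thesis unfolding sigma_pow_app by simp
  qed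
qed

lemma sigma_mult_period:
  assumes p: "sigma_pow r q = q" shows "sigma_pow (m * r) q = q"
proof (induction m rule: int_induct[where k=0])
  case base thus ?case by simp
next
  case (step1 i)
  have "sigma_pow ((i + 1) * r) q = sigma_pow r (sigma_pow (i * r) q)"
    by (simp add: sigma_pow_add algebra_simps)
  thus ?case using step1 p by simp
next
  case (step2 i)
  have "sigma_pow ((i - 1) * r) q = sigma_pow (- r) (sigma_pow (i * r) q)"
    by (simp add: sigma_pow_add algebra_simps)
  also have "\<dots> = sigma_pow (- r) (sigma_pow r q)" using step2 p by simp
  also have "\<dots> = q" by (simp add: sigma_pow_add)
  finally show ?case .
qed

lemma sigma_mod:
  assumes p: "sigma_pow r q = q" shows "sigma_pow d q = sigma_pow (d mod r) q"
proof -
  have "sigma_pow d q = sigma_pow (d mod r) (sigma_pow ((d div r) * r) q)"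
    by (simp add: sigma_pow_add)
  thus ?thesis using sigma_mult_period[OF p] by simp
qed



lemma L1:
  assumes ea: "is_expfac a" and eb: "is_expfac b"
    and comp: "\<forall>k>0. stokes_circle (trunc k a) = stokes_circle (trunc k b) \<longrightarrow> trunc k a = trunc k b"
  shows "slope (a - sigma_pow d b) = max (Sfun a d) (slope (a - b))"
proof -
  define X where "X = a - sigma_pow d a"
  define D where "D = a - b"
  define Y where "Y = a - sigma_pow d b"
  define c where "c = (\<lambda>k. cis (- 2 * pi * of_rat k * of_int d))"
  have eX: "is_expfac X" unfolding X_def using expfac_diff expfac_sigma ea by blast
  have eD: "is_expfac D" unfolding D_def using expfac_diff ea eb by blast
  have eY: "is_expfac Y" unfolding Y_def using expfac_diff expfac_sigma ea eb by blast
  have fX: "finite (Exps X)" and fD: "finite (Exps D)" and fY: "finite (Exps Y)"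
    using eX eD eY expfac_finite by blast+
  have Yc: "\<And>k. Y k = X k + c k * D k"
    unfolding X_def Y_def D_def c_def by (simp add: sigma_pow_app algebra_simps)
  define s where "s = max (slope X) (slope D)"
  have s0: "s \<ge> 0" unfolding s_def using slope_nonneg eX by (simp add: le_max_iff_disj)
  have van: "\<And>k. k > s \<Longrightarrow> Y k = 0"
    using Yc slope_gt_zero[OF fX] slope_gt_zero[OF fD] unfolding s_def by simp
  have key: "s > 0 \<Longrightarrow> Y s \<noteq> 0"
  proof
    assume sp: "s > 0" and Ys: "Y s = 0"
    have Yge: "\<And>k. k \<ge> s \<Longrightarrow> Y k = 0" using Ys van by (metis order.order_iff_strict)
    have "trunc s a = sigma_pow d (trunc s b)"
    proof
      fix k show "trunc s a k = sigma_pow d (trunc s b) k"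
        using Yge[of k] unfolding Y_def trunc_def sigma_pow_app by auto
    qed
    hence "stokes_circle (trunc s a) = stokes_circle (trunc s b)" by simp
    hence "trunc s a = trunc s b" using comp sp by blast
    hence "trunc s a s = trunc s b s" by simp
    hence Ds: "D s = 0" unfolding D_def trunc_def by simp
    show False
    proof (cases "slope D = s")
      case True
      hence "D \<noteq> (\<lambda>_. 0)" using sp by auto
      thus False using slope_nz[OF fD] True Ds by simp
    next
      case False
      hence sX: "slope X = s" unfolding s_def by (simp add: max_def split: if_splits)
      hence "X \<noteq> (\<lambda>_. 0)" using sp by auto
      hence "X s \<noteq> 0" using slope_nz[OF fX] sX by simp
      thus False using Ys Ds Yc[of s] by simp
    qed
  qed
  have "slope Y = s"
  proof (cases "s = 0")
    case True
    have "Y = (\<lambda>_. 0)"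
    proof
      fix k show "Y k = 0"
      proof (cases "k > 0")
        case True thus ?thesis using van \<open>s = 0\<close> by simp
      next
        case False thus ?thesis using eY unfolding is_expfac_def by blast
      qed
    qed
    thus ?thesis using True by simp
  next
    case False
    hence "s > 0" using s0 by simp
    thus ?thesis using slope_eqI[OF fY key van] by blast
  qed
  thus ?thesis unfolding Y_def s_def X_def D_def Sfun_def .
qed

lemma max_slope_eq:
  assumes fA: "finite (Exps A)" and fB: "finite (Exps B)" and f0: "0 \<le> t"
    and hA: "\<And>k. A k \<noteq> 0 \<Longrightarrow> k \<le> t" and hB: "\<And>k. B k \<noteq> 0 \<Longrightarrow> k \<le> t"
    and nz: "A t \<noteq> 0 \<or> B t \<noteq> 0"
  shows "max (slope A) (slope B) = t"
proof -
  have "slope A \<le> t" "slope B \<le> t" using slope_le fA fB f0 hA hB by blast+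
  moreover have "t \<le> slope A \<or> t \<le> slope B" using nz slope_ge fA fB by blast
  ultimately show ?thesis by linarith
qed

lemma L2:
  assumes ea: "is_expfac a" and eb: "is_expfac b"
    and comp: "\<forall>k>0. stokes_circle (trunc k a) = stokes_circle (trunc k b) \<longrightarrow> trunc k a = trunc k b"
    and nc: "stokes_circle a \<noteq> stokes_circle b"
  shows "fission_exp a b = slope (a - b)"
proof -
  define D where "D = a - b"
  define f0 where "f0 = slope D"
  have eD: "is_expfac D" unfolding D_def using expfac_diff ea eb by blast
  have fD: "finite (Exps D)" using expfac_finite eD .
  have fa: "finite (Exps a)" using expfac_finite ea .
  have fb: "finite (Exps b)" using expfac_finite eb .
  have "D \<noteq> (\<lambda>_. 0)"
  proof
    assume "D = (\<lambda>_. 0)"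
    hence "a = b" unfolding D_def by (auto simp: fun_eq_iff)
    thus False using nc by simp
  qed
  hence Df0: "D f0 \<noteq> 0" unfolding f0_def using slope_nz fD by blast
  hence f0p: "f0 > 0" using eD unfolding is_expfac_def by blast
  have Dz: "\<And>k. k > f0 \<Longrightarrow> a k = b k"
    using slope_gt_zero[OF fD] unfolding f0_def D_def by simp
  define K where "K = {k \<in> Exps a. stokes_circle (trunc k a) = stokes_circle (trunc k b)}"
  have A: "\<And>k. k > f0 \<Longrightarrow> trunc k a = trunc k b"
    unfolding trunc_def using Dz by (auto simp: fun_eq_iff)
  have B: "\<And>k. k \<in> K \<Longrightarrow> k > f0"
  proof (rule ccontr)
    fix k assume k: "k \<in> K" and "\<not> k > f0"
    hence kf: "k \<le> f0" by simp
    have "k > 0" using k ea unfolding K_def Exps_def is_expfac_def by blast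
    hence "trunc k a = trunc k b" using comp k unfolding K_def by blast
    hence "trunc k a f0 = trunc k b f0" by simp
    hence "D f0 = 0" using kf unfolding trunc_def D_def by simp
    thus False using Df0 by simp
  qed
  have C: "\<And>k. a k \<noteq> 0 \<Longrightarrow> k > f0 \<Longrightarrow> k \<in> K"
    unfolding K_def Exps_def using A by simp
  have C': "\<And>k. b k \<noteq> 0 \<Longrightarrow> k > f0 \<Longrightarrow> a k \<noteq> 0"
    using Dz by simp
  have fK: "finite K" unfolding K_def using fa by simp
  have nz: "a f0 \<noteq> 0 \<or> b f0 \<noteq> 0" using Df0 unfolding D_def by auto
  have fe: "fission_exp a b = max (slope (a - (if K = {} then (\<lambda>_. 0) else trunc (Min K) a)))
                                  (slope (b - (if K = {} then (\<lambda>_. 0) else trunc (Min K) b)))"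
    by (simp only: fission_exp_def Let_def K_def)
  show ?thesis
  proof (cases "K = {}")
    case True
    have ha: "\<And>k. a k \<noteq> 0 \<Longrightarrow> k \<le> f0"
    proof (rule ccontr)
      fix k assume "a k \<noteq> 0" "\<not> k \<le> f0"
      hence "k \<in> K" using C by simp
      thus False using True by simp
    qed
    have hb: "\<And>k. b k \<noteq> 0 \<Longrightarrow> k \<le> f0"
    proof (rule ccontr)
      fix k assume "b k \<noteq> 0" "\<not> k \<le> f0"
      hence "k \<in> K" using C C' by simp
      thus False using True by simp
    qed
    have "max (slope a) (slope b) = f0"
      by (rule max_slope_eq[OF fa fb _ ha hb nz]) (use f0p in simp)
    moreover have "a - (\<lambda>_. 0) = a" "b - (\<lambda>_. 0) = b" by (auto simp: fun_eq_iff)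
    ultimately show ?thesis unfolding fe f0_def D_def using True by simp
  next
    case False
    define m where "m = Min K"
    have mK: "m \<in> K" unfolding m_def using Min_in fK False by blast
    have mf: "m > f0" using B mK .
    have mle: "\<And>k. k \<in> K \<Longrightarrow> m \<le> k" unfolding m_def using Min_le fK by blast
    have fA': "finite (Exps (a - trunc m a))" using expfac_finite[OF expfac_diff[OF ea expfac_trunc[OF ea]]] .
    have fB': "finite (Exps (b - trunc m b))" using expfac_finite[OF expfac_diff[OF eb expfac_trunc[OF eb]]] .
    have appA: "\<And>k. (a - trunc m a) k = (if m \<le> k then 0 else a k)" by (simp add: trunc_def)
    have appB: "\<And>k. (b - trunc m b) k = (if m \<le> k then 0 else b k)" by (simp add: trunc_def)
    have "max (slope (a - trunc m a)) (slope (b - trunc m b)) = f0"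
    proof (rule max_slope_eq[OF fA' fB'])
      show "0 \<le> f0" using f0p by simp
      show "k \<le> f0" if "(a - trunc m a) k \<noteq> 0" for k
      proof (rule ccontr)
        assume "\<not> k \<le> f0"
        moreover have "a k \<noteq> 0" "k < m" using that unfolding appA by (auto split: if_splits)
        ultimately have "k \<in> K" using C by simp
        thus False using mle \<open>k < m\<close> by fastforce
      qed
      show "k \<le> f0" if "(b - trunc m b) k \<noteq> 0" for k
      proof (rule ccontr)
        assume "\<not> k \<le> f0"
        moreover have "b k \<noteq> 0" "k < m" using that unfolding appB by (auto split: if_splits)
        ultimately have "k \<in> K" using C C' by simp
        thus False using mle \<open>k < m\<close> by fastforce
      qed
      show "(a - trunc m a) f0 \<noteq> 0 \<or> (b - trunc m b) f0 \<noteq> 0"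
        unfolding appA appB using nz mf by simp
    qed
    thus ?thesis unfolding fe f0_def D_def m_def using False by simp
  qed
qed



lemma slope_shift: "slope (sigma_pow k a - sigma_pow l b) = slope (a - sigma_pow (l - k) b)"
proof -
  have "sigma_pow k a - sigma_pow l b = sigma_pow k (a - sigma_pow (l - k) b)"
    by (simp add: sigma_pow_diff sigma_pow_add)
  thus ?thesis by simp
qed

lemma Sfun_mod: "is_expfac q \<Longrightarrow> sigma_pow d q = sigma_pow (d mod int (ram q)) q"
  using sigma_mod[OF sigma_ram] by blast

theorem mainTheorem7:
  fixes Q Q' :: "(nat \<times> expfac) list"
  assumes "pointed_irr_type Q" and "compatible Q"
    and "\<forall>i < length Q'. fst (Q' ! i) > 0 \<and> is_expfac (snd (Q' ! i))"
  shows "sim_irr Q' Q \<longleftrightarrow>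
           (pointed_irr_type Q' \<and> compatible Q' \<and> same_fission_datum Q' Q)"
proof
  define n where "n = length Q"
  have eQ: "\<And>i. i < n \<Longrightarrow> is_expfac (snd (Q ! i))" using assms(1) unfolding pointed_irr_type_def n_def by blast
  have dQ: "\<And>i j. i < n \<Longrightarrow> j < n \<Longrightarrow> i \<noteq> j \<Longrightarrow> stokes_circle (snd (Q ! i)) \<noteq> stokes_circle (snd (Q ! j))"
    using assms(1) unfolding pointed_irr_type_def n_def by blast
  have cQ: "\<And>i j. i < n \<Longrightarrow> j < n \<Longrightarrow> \<forall>k>0. stokes_circle (trunc k (snd (Q ! i))) = stokes_circle (trunc k (snd (Q ! j))) \<longrightarrow> trunc k (snd (Q ! i)) = trunc k (snd (Q ! j))"
    using assms(2) unfolding compatible_def n_def by blast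
  assume sim: "sim_irr Q' Q"
  have len: "length Q' = n" using sim unfolding sim_irr_def n_def by simp
  have eQ': "\<And>i. i < n \<Longrightarrow> is_expfac (snd (Q' ! i))" using assms(3) len by simp
  have simS: "\<And>i j k l. i < n \<Longrightarrow> j < n \<Longrightarrow> k \<le> ram (snd (Q ! i)) \<Longrightarrow> l \<le> ram (snd (Q ! j)) \<Longrightarrow>
     slope (sigma_pow (int k) (snd (Q' ! i)) - sigma_pow (int l) (snd (Q' ! j))) =
     slope (sigma_pow (int k) (snd (Q ! i)) - sigma_pow (int l) (snd (Q ! j)))"
    using sim unfolding sim_irr_def n_def by blast
  have S1: "\<And>i l. i < n \<Longrightarrow> l \<le> ram (snd (Q ! i)) \<Longrightarrow> Sfun (snd (Q' ! i)) (int l) = Sfun (snd (Q ! i)) (int l)"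
    using simS[of _ _ 0] unfolding Sfun_def by fastforce
  have P': "\<And>i. i < n \<Longrightarrow> sigma_pow (int (ram (snd (Q ! i)))) (snd (Q' ! i)) = snd (Q' ! i)"
  proof -
    fix i assume i: "i < n"
    have "Sfun (snd (Q ! i)) (int (ram (snd (Q ! i)))) = 0"
      unfolding Sfun_def using sigma_ram[OF eQ[OF i]] by simp
    hence "Sfun (snd (Q' ! i)) (int (ram (snd (Q ! i)))) = 0" using S1[OF i order.refl] by simp
    hence "snd (Q' ! i) - sigma_pow (int (ram (snd (Q ! i)))) (snd (Q' ! i)) = (\<lambda>_. 0)"
      unfolding Sfun_def using slope_zero_iff[OF expfac_diff[OF eQ'[OF i] expfac_sigma[OF eQ'[OF i]]]] by blast
    thus "sigma_pow (int (ram (snd (Q ! i)))) (snd (Q' ! i)) = snd (Q' ! i)"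
      by (auto simp: fun_eq_iff)
  qed
  have modQ': "\<And>i d. i < n \<Longrightarrow> sigma_pow d (snd (Q' ! i)) = sigma_pow (d mod int (ram (snd (Q ! i)))) (snd (Q' ! i))"
    using sigma_mod P' by blast
  have modQ: "\<And>i d. i < n \<Longrightarrow> sigma_pow d (snd (Q ! i)) = sigma_pow (d mod int (ram (snd (Q ! i)))) (snd (Q ! i))"
    using Sfun_mod eQ by blast
  have rpos: "\<And>i. i < n \<Longrightarrow> ram (snd (Q ! i)) \<ge> 1" using ram_prop eQ by blast
  have modb: "\<And>i d. i < n \<Longrightarrow> d mod int (ram (snd (Q ! i))) = int (nat (d mod int (ram (snd (Q ! i))))) \<and>
       nat (d mod int (ram (snd (Q ! i)))) \<le> ram (snd (Q ! i))"
  proof -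
    fix i d assume i: "i < n"
    have "int (ram (snd (Q ! i))) > 0" using rpos[OF i] by simp
    thus "d mod int (ram (snd (Q ! i))) = int (nat (d mod int (ram (snd (Q ! i))))) \<and>
       nat (d mod int (ram (snd (Q ! i)))) \<le> ram (snd (Q ! i))"
    proof -
      assume p: "int (ram (snd (Q ! i))) > 0"
      have e0: "0 \<le> d mod int (ram (snd (Q ! i)))" using p by simp
      have e1: "d mod int (ram (snd (Q ! i))) < int (ram (snd (Q ! i)))" using p by simp
      show ?thesis using e0 e1 by linarith
    qed
  qed
  have S3: "\<And>i d. i < n \<Longrightarrow> Sfun (snd (Q' ! i)) d = Sfun (snd (Q ! i)) d"
  proof -
    fix i d assume i: "i < n"
    let ?e = "d mod int (ram (snd (Q ! i)))"
    have "Sfun (snd (Q' ! i)) d = Sfun (snd (Q' ! i)) (int (nat ?e))"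
      unfolding Sfun_def using modQ'[OF i, of d] modb[OF i, of d] by simp
    also have "\<dots> = Sfun (snd (Q ! i)) (int (nat ?e))" using S1[OF i] modb[OF i, of d] by blast
    also have "\<dots> = Sfun (snd (Q ! i)) d"
      unfolding Sfun_def using modQ[OF i, of d] modb[OF i, of d] by simp
    finally show "Sfun (snd (Q' ! i)) d = Sfun (snd (Q ! i)) d" .
  qed
  have F4: "\<And>i j. i < n \<Longrightarrow> j < n \<Longrightarrow> slope (snd (Q' ! i) - snd (Q' ! j)) = slope (snd (Q ! i) - snd (Q ! j))"
    using simS[of _ _ 0 0] by simp
  have F5: "\<And>i j m. i < n \<Longrightarrow> j < n \<Longrightarrow> slope (sigma_pow m (snd (Q' ! i)) - snd (Q' ! j)) = slope (sigma_pow m (snd (Q ! i)) - snd (Q ! j))"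
  proof -
    fix i j m assume i: "i < n" and j: "j < n"
    let ?e = "m mod int (ram (snd (Q ! i)))"
    have "slope (sigma_pow m (snd (Q' ! i)) - snd (Q' ! j)) = slope (sigma_pow (int (nat ?e)) (snd (Q' ! i)) - sigma_pow (int 0) (snd (Q' ! j)))"
      using modQ'[OF i, of m] modb[OF i, of m] by simp
    also have "\<dots> = slope (sigma_pow (int (nat ?e)) (snd (Q ! i)) - sigma_pow (int 0) (snd (Q ! j)))"
      using simS[OF i j conjunct2[OF modb[OF i, of m]], of 0] by simp
    also have "\<dots> = slope (sigma_pow m (snd (Q ! i)) - snd (Q ! j))"
      using modQ[OF i, of m] modb[OF i, of m] by simp
    finally show "slope (sigma_pow m (snd (Q' ! i)) - snd (Q' ! j)) = slope (sigma_pow m (snd (Q ! i)) - snd (Q ! j))" .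
  qed
  have dQ': "\<And>i j. i < n \<Longrightarrow> j < n \<Longrightarrow> i \<noteq> j \<Longrightarrow> stokes_circle (snd (Q' ! i)) \<noteq> stokes_circle (snd (Q' ! j))"
  proof
    fix i j assume i: "i < n" and j: "j < n" and ij: "i \<noteq> j"
      and c: "stokes_circle (snd (Q' ! i)) = stokes_circle (snd (Q' ! j))"
    then obtain m where m: "snd (Q' ! j) = sigma_pow m (snd (Q' ! i))" using circle_eq_iff by blast
    have "slope (sigma_pow m (snd (Q ! i)) - snd (Q ! j)) = 0" using F5[OF i j, of m] m by simp
    hence "sigma_pow m (snd (Q ! i)) - snd (Q ! j) = (\<lambda>_. 0)"
      using slope_zero_iff[OF expfac_diff[OF expfac_sigma[OF eQ[OF i]] eQ[OF j]]] by blast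
    hence "snd (Q ! j) = sigma_pow m (snd (Q ! i))" by (auto simp: fun_eq_iff)
    hence "stokes_circle (snd (Q ! i)) = stokes_circle (snd (Q ! j))" using circle_eq_iff by blast
    thus False using dQ[OF i j ij] by blast
  qed
  have cQ': "\<And>i j. i < n \<Longrightarrow> j < n \<Longrightarrow> \<forall>k>0. stokes_circle (trunc k (snd (Q' ! i))) = stokes_circle (trunc k (snd (Q' ! j))) \<longrightarrow> trunc k (snd (Q' ! i)) = trunc k (snd (Q' ! j))"
  proof (intro allI impI)
    fix i j k assume i: "i < n" and j: "j < n" and k: "(0::rat) < k"
      and c: "stokes_circle (trunc k (snd (Q' ! i))) = stokes_circle (trunc k (snd (Q' ! j)))"
    then obtain m where m: "trunc k (snd (Q' ! j)) = sigma_pow m (trunc k (snd (Q' ! i)))" using circle_eq_iff by blast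
    hence "trunc k (sigma_pow m (snd (Q' ! i))) = trunc k (snd (Q' ! j))" by (simp add: trunc_sigma)
    hence "slope (sigma_pow m (snd (Q' ! i)) - snd (Q' ! j)) < k"
      using trunc_eq_iff[OF expfac_sigma[OF eQ'[OF i]] eQ'[OF j] k] by blast
    hence "slope (sigma_pow m (snd (Q ! i)) - snd (Q ! j)) < k" using F5[OF i j] by simp
    hence "trunc k (sigma_pow m (snd (Q ! i))) = trunc k (snd (Q ! j))"
      using trunc_eq_iff[OF expfac_sigma[OF eQ[OF i]] eQ[OF j] k] by blast
    hence "sigma_pow m (trunc k (snd (Q ! i))) = trunc k (snd (Q ! j))" by (simp add: trunc_sigma)
    hence "stokes_circle (trunc k (snd (Q ! i))) = stokes_circle (trunc k (snd (Q ! j)))"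
      using circle_eq_iff by metis
    hence "trunc k (snd (Q ! i)) = trunc k (snd (Q ! j))" using cQ[OF i j] k by blast
    hence "slope (snd (Q ! i) - snd (Q ! j)) < k" using trunc_eq_iff[OF eQ[OF i] eQ[OF j] k] by blast
    hence "slope (snd (Q' ! i) - snd (Q' ! j)) < k" using F4[OF i j] by simp
    thus "trunc k (snd (Q' ! i)) = trunc k (snd (Q' ! j))" using trunc_eq_iff[OF eQ'[OF i] eQ'[OF j] k] by blast
  qed
  show "pointed_irr_type Q' \<and> compatible Q' \<and> same_fission_datum Q' Q"
  proof (intro conjI)
    show "pointed_irr_type Q'" unfolding pointed_irr_type_def using assms(3) dQ' len by simp
    show "compatible Q'" unfolding compatible_def using cQ' len by simp
    show "same_fission_datum Q' Q" unfolding same_fission_datum_def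
    proof (intro conjI allI impI)
      show "length Q' = length Q" using len n_def by simp
      fix i assume i: "i < length Q"
      show "fst (Q' ! i) = fst (Q ! i)" using sim i unfolding sim_irr_def by blast
      show "Levels (snd (Q' ! i)) = Levels (snd (Q ! i))"
        unfolding Levels_Sfun using S3 i n_def by (simp add: fun_eq_iff)
    next
      fix i j assume i0: "i < length Q" and j0: "j < length Q" and ij: "i \<noteq> j"
      have i: "i < n" and j: "j < n" using i0 j0 n_def by simp_all
      have "fission_exp (snd (Q' ! i)) (snd (Q' ! j)) = slope (snd (Q' ! i) - snd (Q' ! j))"
        by (rule L2[OF eQ'[OF i] eQ'[OF j] cQ'[OF i j] dQ'[OF i j ij]])
      also have "\<dots> = slope (snd (Q ! i) - snd (Q ! j))" by (rule F4[OF i j])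
      also have "\<dots> = fission_exp (snd (Q ! i)) (snd (Q ! j))"
        by (rule L2[OF eQ[OF i] eQ[OF j] cQ[OF i j] dQ[OF i j ij], symmetric])
      finally show "fission_exp (snd (Q' ! i)) (snd (Q' ! j)) = fission_exp (snd (Q ! i)) (snd (Q ! j))" .
    qed
  qed
next
  define n where "n = length Q"
  have eQ: "\<And>i. i < n \<Longrightarrow> is_expfac (snd (Q ! i))" using assms(1) unfolding pointed_irr_type_def n_def by blast
  have dQ: "\<And>i j. i < n \<Longrightarrow> j < n \<Longrightarrow> i \<noteq> j \<Longrightarrow> stokes_circle (snd (Q ! i)) \<noteq> stokes_circle (snd (Q ! j))"
    using assms(1) unfolding pointed_irr_type_def n_def by blast
  have cQ: "\<And>i j. i < n \<Longrightarrow> j < n \<Longrightarrow> \<forall>k>0. stokes_circle (trunc k (snd (Q ! i))) = stokes_circle (trunc k (snd (Q ! j))) \<longrightarrow> trunc k (snd (Q ! i)) = trunc k (snd (Q ! j))"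
    using assms(2) unfolding compatible_def n_def by blast
  assume R: "pointed_irr_type Q' \<and> compatible Q' \<and> same_fission_datum Q' Q"
  have len: "length Q' = n" using R unfolding same_fission_datum_def n_def by simp
  have eQ': "\<And>i. i < n \<Longrightarrow> is_expfac (snd (Q' ! i))" using assms(3) len by simp
  have dQ': "\<And>i j. i < n \<Longrightarrow> j < n \<Longrightarrow> i \<noteq> j \<Longrightarrow> stokes_circle (snd (Q' ! i)) \<noteq> stokes_circle (snd (Q' ! j))"
    using R len unfolding pointed_irr_type_def by auto
  have cQ': "\<And>i j. i < n \<Longrightarrow> j < n \<Longrightarrow> \<forall>k>0. stokes_circle (trunc k (snd (Q' ! i))) = stokes_circle (trunc k (snd (Q' ! j))) \<longrightarrow> trunc k (snd (Q' ! i)) = trunc k (snd (Q' ! j))"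
    using R len unfolding compatible_def by auto
  have SE: "\<And>i d. i < n \<Longrightarrow> Sfun (snd (Q' ! i)) d = Sfun (snd (Q ! i)) d"
  proof -
    fix i d assume i: "i < n"
    have "Levels (snd (Q' ! i)) = Levels (snd (Q ! i))"
      using R i unfolding same_fission_datum_def n_def by blast
    thus "Sfun (snd (Q' ! i)) d = Sfun (snd (Q ! i)) d" by (rule Sfun_eq[OF eQ'[OF i] eQ[OF i]])
  qed
  have DE: "\<And>i j. i < n \<Longrightarrow> j < n \<Longrightarrow> slope (snd (Q' ! i) - snd (Q' ! j)) = slope (snd (Q ! i) - snd (Q ! j))"
  proof -
    fix i j assume i: "i < n" and j: "j < n"
    show "slope (snd (Q' ! i) - snd (Q' ! j)) = slope (snd (Q ! i) - snd (Q ! j))"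
    proof (cases "i = j")
      case True thus ?thesis by simp
    next
      case ij: False
      have "slope (snd (Q' ! i) - snd (Q' ! j)) = fission_exp (snd (Q' ! i)) (snd (Q' ! j))"
        by (rule L2[OF eQ'[OF i] eQ'[OF j] cQ'[OF i j] dQ'[OF i j ij], symmetric])
      also have "\<dots> = fission_exp (snd (Q ! i)) (snd (Q ! j))"
        using R i j ij unfolding same_fission_datum_def n_def by blast
      also have "\<dots> = slope (snd (Q ! i) - snd (Q ! j))"
        by (rule L2[OF eQ[OF i] eQ[OF j] cQ[OF i j] dQ[OF i j ij]])
      finally show ?thesis .
    qed
  qed
  show "sim_irr Q' Q" unfolding sim_irr_def
  proof (intro conjI allI impI)
    show "length Q' = length Q" using len n_def by simp
    fix i assume i: "i < length Q"
    show "fst (Q' ! i) = fst (Q ! i)" using R i unfolding same_fission_datum_def by blast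
  next
    fix i j k l assume i0: "i < length Q" and j0: "j < length Q"
    have i: "i < n" and j: "j < n" using i0 j0 n_def by simp_all
    show "slope (sigma_pow (int k) (snd (Q' ! i)) - sigma_pow (int l) (snd (Q' ! j))) =
          slope (sigma_pow (int k) (snd (Q ! i)) - sigma_pow (int l) (snd (Q ! j)))"
      unfolding slope_shift L1[OF eQ'[OF i] eQ'[OF j] cQ'[OF i j]] L1[OF eQ[OF i] eQ[OF j] cQ[OF i j]]
        SE[OF i] DE[OF i j] ..
  qed
qed


end
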